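(* Let $P$ be a prismatoid. Then the top and the bottom of $P$ are Minkowski equivalent.
   Context: A $d$-dimensional prism is a polytope affinely equivalent to $Q \times [0,1]$ for some $(d-1)$-dimensional polytope $Q$; its top and bottom facets are the images of $Q\times\{1\}$ and $Q \times \{0\}$. A prismatoid is a polytope whose face lattice is isomorphic to that of a prism and such that the two facets corresponding to the top and bottom facets of the prism (called the top and bottom of the prismatoid) are parallel. Two faces $F,G$ are parallel if $\mathrm{lin}(F)=\mathrm{lin}(G)$, where $\mathrm{lin}(F)$ is the linear subspace parallel to the affine hull of $F$. Two polytopes are Minkowski equivalent if they have the same normal fan. *)

theory Defs
  imports "HOL-Analysis.Analysis"
begin

definition lin :: "'a::euclidean_space set \<Rightarrow> 'a set" where
  "lin F = span {x - y | x y. x \<in> F \<and> y \<in> F}"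

definition parallel_faces :: "'a::euclidean_space set \<Rightarrow> 'a set \<Rightarrow> bool" where
  "parallel_faces F G \<longleftrightarrow> lin F = lin G"

definition face_lattice_iso ::
  "'a::euclidean_space set \<Rightarrow> 'b::euclidean_space set \<Rightarrow> ('a set \<Rightarrow> 'b set) \<Rightarrow> bool" where
  "face_lattice_iso P R f \<longleftrightarrow>
     bij_betw f {F. F face_of P} {G. G face_of R} \<and>
     (\<forall>F\<in>{F. F face_of P}. \<forall>F'\<in>{F. F face_of P}. F \<subseteq> F' \<longleftrightarrow> f F \<subseteq> f F')"

text \<open>P is a prismatoid with top T and bottom B: there is a nonempty polytope Q
  and a face lattice isomorphism from P to the prism Q \<times> [0,1] sending T to
  Q \<times> {1} and B to Q \<times> {0}; moreover T and B are parallel.  (Q may be taken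
  in the ambient space of P, since dim Q = dim P - 1.)\<close>
definition prismatoid_with :: "'a::euclidean_space set \<Rightarrow> 'a set \<Rightarrow> 'a set \<Rightarrow> bool" where
  "prismatoid_with P T B \<longleftrightarrow> polytope P \<and>
     (\<exists>(Q::'a set) (f :: 'a set \<Rightarrow> ('a \<times> real) set).
        polytope Q \<and> Q \<noteq> {} \<and>
        face_lattice_iso P (Q \<times> {0..1}) f \<and>
        T face_of P \<and> B face_of P \<and>
        f T = Q \<times> {1} \<and> f B = Q \<times> {0}) \<and>
     parallel_faces T B"

definition normal_cone :: "'a::euclidean_space set \<Rightarrow> 'a set \<Rightarrow> 'a set" where
  "normal_cone P F = {c. \<forall>x\<in>F. \<forall>y\<in>P. inner c y \<le> inner c x}"

definition normal_fan :: "'a::euclidean_space set \<Rightarrow> 'a set set" where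
  "normal_fan P = {normal_cone P F | F. F face_of P \<and> F \<noteq> {}}"

definition minkowski_equivalent :: "'a::euclidean_space set \<Rightarrow> 'a set \<Rightarrow> bool" where
  "minkowski_equivalent P R \<longleftrightarrow> normal_fan P = normal_fan R"

end

theory Submission imports Defs begin

definition amax :: "'a::euclidean_space \<Rightarrow> 'a set \<Rightarrow> 'a set" where
  "amax c T = {x\<in>T. \<forall>y\<in>T. c \<bullet> y \<le> c \<bullet> x}"

lemma amax_face:
  fixes T :: "'a::euclidean_space set"
  assumes "compact T" "convex T"
  shows "amax c T face_of T"
proof (cases "T = {}")
  case True then show ?thesis by (simp add: amax_def)
next
  case False
  obtain x0 where x0: "x0 \<in> T" "\<And>y. y \<in> T \<Longrightarrow> c \<bullet> y \<le> c \<bullet> x0"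
    using continuous_attains_sup[OF assms(1) False, of "\<lambda>x. c \<bullet> x"]
    using continuous_on_inner[OF continuous_on_const continuous_on_id] by blast
  have "amax c T = T \<inter> {x. c \<bullet> x = c \<bullet> x0}"
    using x0 by (force simp: amax_def)
  moreover have "(T \<inter> {x. c \<bullet> x = c \<bullet> x0}) face_of T"
    by (rule face_of_Int_supporting_hyperplane_le[OF assms(2)]) (use x0 in auto)
  ultimately show ?thesis by simp
qed

lemma amax_nonempty:
  fixes T :: "'a::euclidean_space set"
  assumes "compact T" "T \<noteq> {}"
  shows "amax c T \<noteq> {}"
proof -
  obtain x0 where x0: "x0 \<in> T" "\<And>y. y \<in> T \<Longrightarrow> c \<bullet> y \<le> c \<bullet> x0"
    using continuous_attains_sup[OF assms(1) assms(2), of "\<lambda>x. c \<bullet> x"]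
    using continuous_on_inner[OF continuous_on_const continuous_on_id] by blast
  then show ?thesis by (auto simp: amax_def)
qed

lemma endpoint_face:
  assumes "s \<in> {0::real, 1}"
  shows "{s} face_of {0..1::real}"
proof -
  have "s extreme_point_of {0..1::real}"
    using assms by (auto simp: extreme_point_of_def open_segment_eq_real_ivl)
  then show ?thesis by (simp add: face_of_singleton)
qed

lemma normal_cone_iff:
  assumes "F \<subseteq> T"
  shows "c \<in> normal_cone T F \<longleftrightarrow> F \<subseteq> amax c T"
  using assms by (auto simp: normal_cone_def amax_def)

lemma slice_ne: "(X \<times> I) \<inter> (Q \<times> {s}) \<noteq> {} \<Longrightarrow> s \<in> I"
  by auto

lemma slice_eq: "s \<in> I \<Longrightarrow> X \<subseteq> Q \<Longrightarrow> (X \<times> I) \<inter> (Q \<times> {s}) = X \<times> {s}"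
  by auto

locale fli =
  fixes P :: "'a::euclidean_space set" and Q :: "'a set" and f :: "'a set \<Rightarrow> ('a \<times> real) set"
  assumes iso: "face_lattice_iso P (Q \<times> {0..1}) f"
begin

lemma f_face: "F face_of P \<Longrightarrow> f F face_of (Q \<times> {0..1})"
  using iso unfolding face_lattice_iso_def bij_betw_def by auto

lemma f_surj: "G face_of (Q \<times> {0..1}) \<Longrightarrow> \<exists>F. F face_of P \<and> f F = G"
proof -
  assume "G face_of (Q \<times> {0..1})"
  then have "G \<in> f ` {F. F face_of P}" using iso unfolding face_lattice_iso_def bij_betw_def by auto
  then show ?thesis by auto
qed

lemma f_mono: "F face_of P \<Longrightarrow> F' face_of P \<Longrightarrow> F \<subseteq> F' \<longleftrightarrow> f F \<subseteq> f F'"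
  using iso unfolding face_lattice_iso_def by auto

lemma f_empty: "f {} = {}"
proof -
  obtain F where F: "F face_of P" "f F = {}" using f_surj[of "{}"] by auto
  have "f {} \<subseteq> f F" using f_mono[of "{}" F] F by auto
  then show ?thesis using F by auto
qed

lemma f_eq_empty: "F face_of P \<Longrightarrow> f F = {} \<longleftrightarrow> F = {}"
  using f_mono[of F "{}"] f_empty by auto

lemma f_Int: "A face_of P \<Longrightarrow> C face_of P \<Longrightarrow> f (A \<inter> C) = f A \<inter> f C"
proof -
  assume A: "A face_of P" and C: "C face_of P"
  have AC: "(A \<inter> C) face_of P" using face_of_Int[OF A C] .
  have "f A \<inter> f C face_of (Q \<times> {0..1})" using face_of_Int[OF f_face[OF A] f_face[OF C]] .
  then obtain X where X: "X face_of P" "f X = f A \<inter> f C" using f_surj by blast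
  have "X \<subseteq> A" "X \<subseteq> C" using f_mono[OF X(1) A] f_mono[OF X(1) C] X(2) by auto
  then have "f X \<subseteq> f (A \<inter> C)" using f_mono[OF X(1) AC] by auto
  moreover have "f (A \<inter> C) \<subseteq> f A" "f (A \<inter> C) \<subseteq> f C"
    using f_mono[OF AC A] f_mono[OF AC C] by auto
  ultimately show ?thesis using X(2) by auto
qed

end


locale prz = fli P Q f for P :: "'a::euclidean_space set" and Q f +
  fixes T B :: "'a set"
  assumes polyP: "polytope P" and polyQ: "polytope Q" and Qne: "Q \<noteq> {}"
    and TP: "T face_of P" and BP: "B face_of P"
    and fT: "f T = Q \<times> {1}" and fB: "f B = Q \<times> {0}"
    and par: "lin T = lin B"
begin

lemma T_ne: "T \<noteq> {}" using f_eq_empty[OF TP] fT Qne by auto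
lemma B_ne: "B \<noteq> {}" using f_eq_empty[OF BP] fB Qne by auto

lemma T_neq_P: "T \<noteq> P"
proof
  assume "T = P"
  then have "B \<subseteq> T" using face_of_imp_subset[OF BP] by simp
  then have "f B \<subseteq> f T" using f_mono[OF BP TP] by simp
  then show False using fT fB Qne by auto
qed

lemma T_compact: "compact T" using face_of_polytope_polytope[OF polyP TP] polytope_imp_compact by blast
lemma B_compact: "compact B" using face_of_polytope_polytope[OF polyP BP] polytope_imp_compact by blast
lemma T_convex: "convex T" using face_of_imp_convex[OF TP] .
lemma B_convex: "convex B" using face_of_imp_convex[OF BP] .

lemma extreme_in: 
  assumes "x extreme_point_of P" shows "x \<in> T \<union> B"
proof -
  have x: "{x} face_of P" using assms face_of_singleton by blast
  obtain X I where XI: "X face_of Q" "I face_of {0..1::real}" "f {x} = X \<times> I"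
    using f_face[OF x] face_of_Times_decomp by blast
  have ne: "X \<times> I \<noteq> {}" using f_eq_empty[OF x] XI(3) by auto
  then obtain p where p: "p \<in> I" by auto
  have pI: "p \<in> {0..1}" using p face_of_imp_subset[OF XI(2)] by auto
  obtain s where s: "s \<in> {0::real,1}" "s \<in> I"
  proof (cases "p = 0 \<or> p = 1")
    case True then show ?thesis using that p by auto
  next
    case False
    then have "p \<in> open_segment 0 1" using pI by (auto simp: open_segment_eq_real_ivl)
    then have "(0::real) \<in> I" using face_ofD[OF XI(2)] p by auto
    then show ?thesis using that by auto
  qed
  have Xne: "X \<noteq> {}" using ne by auto
  have "X \<times> {s} face_of (Q \<times> {0..1})"
    using face_of_Times_eq XI(1) endpoint_face[OF s(1)] by blast
  then obtain G where G: "G face_of P" "f G = X \<times> {s}" using f_surj by blast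
  have "G \<subseteq> {x}" using f_mono[OF G(1) x] G(2) XI(3) s(2) by auto
  moreover have "G \<noteq> {}" using f_eq_empty[OF G(1)] G(2) Xne by auto
  ultimately have "G = {x}" by auto
  then have fx: "f {x} \<subseteq> Q \<times> {s}" using G(2) face_of_imp_subset[OF XI(1)] by auto
  show ?thesis
  proof (cases "s = 0")
    case True
    then have "{x} \<subseteq> B" using f_mono[OF x BP] fx fB by auto
    then show ?thesis by auto
  next
    case False
    then have "s = 1" using s by auto
    then have "{x} \<subseteq> T" using f_mono[OF x TP] fx fT by auto
    then show ?thesis by auto
  qed
qed

lemma P_hull: "P = convex hull (T \<union> B)"
proof
  have "P = convex hull {x. x extreme_point_of P}"
    using Krein_Milman_Minkowski polytope_imp_compact polytope_imp_convex polyP by blast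
  also have "\<dots> \<subseteq> convex hull (T \<union> B)"
    using extreme_in by (intro hull_mono) auto
  finally show "P \<subseteq> convex hull (T \<union> B)" .
  show "convex hull (T \<union> B) \<subseteq> P"
    using face_of_imp_subset[OF TP] face_of_imp_subset[OF BP] polytope_imp_convex[OF polyP]
    by (intro hull_minimal) auto
qed

lemma lin_aff:
  assumes "t0 \<in> T" "v \<in> lin T" shows "t0 + v \<in> affine hull T"
proof -
  have e: "affine hull T = (\<lambda>x. t0 + x) ` span ((\<lambda>x. - t0 + x) ` T)"
  proof -
    have "t0 \<in> affine hull T" using assms(1) by (rule hull_inc)
    then show ?thesis by (rule affine_hull_span_gen)
  qed
  have sub: "{x - y |x y. x \<in> T \<and> y \<in> T} \<subseteq> span ((\<lambda>x. - t0 + x) ` T)"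
  proof clarify
    fix x y assume "x \<in> T" "y \<in> T"
    then have "(- t0 + x) - (- t0 + y) \<in> span ((\<lambda>x. - t0 + x) ` T)"
      by (intro span_diff span_base imageI)
    then show "x - y \<in> span ((\<lambda>x. - t0 + x) ` T)" by (simp add: algebra_simps)
  qed
  have "lin T \<subseteq> span ((\<lambda>x. - t0 + x) ` T)"
    unfolding lin_def using span_mono[OF sub] by (simp only: span_span)
  then have "v \<in> span ((\<lambda>x. - t0 + x) ` T)" using assms(2) by blast
  then have "t0 + v \<in> (\<lambda>x. t0 + x) ` span ((\<lambda>x. - t0 + x) ` T)" by (rule imageI)
  then show ?thesis using e by simp
qed

lemma not_in_lin:
  assumes "t0 \<in> T" "b0 \<in> B" shows "t0 - b0 \<notin> lin T"
proof
  assume h: "t0 - b0 \<in> lin T"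
  have "B \<subseteq> affine hull T"
  proof
    fix y assume y: "y \<in> B"
    have "y - b0 \<in> lin B" unfolding lin_def using y assms(2) by (intro span_base) auto
    then have "y - b0 \<in> lin T" using par by simp
    then have "(y - b0) - (t0 - b0) \<in> lin T" using h unfolding lin_def by (rule span_diff)
    then have "t0 + ((y - b0) - (t0 - b0)) \<in> affine hull T" using lin_aff assms(1) by blast
    then show "y \<in> affine hull T" by simp
  qed
  then have "T \<union> B \<subseteq> affine hull T" using hull_subset[of T affine] by (intro Un_least)
  moreover have "convex (affine hull T)" using affine_imp_convex affine_affine_hull by blast
  ultimately have "convex hull (T \<union> B) \<subseteq> affine hull T" by (rule hull_minimal)
  then have "P \<subseteq> affine hull T" using P_hull by simp
  then have "aff_dim P \<le> aff_dim (affine hull T)"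
    by (rule aff_dim_subset)
  then have "aff_dim P \<le> aff_dim T" by simp
  moreover have "aff_dim T < aff_dim P"
    using face_of_aff_dim_lt[OF polytope_imp_convex[OF polyP] TP T_neq_P] .
  ultimately show False by simp
qed


lemma key: "\<exists>G0. f (amax c T) = G0 \<times> {1} \<and> f (amax c B) = G0 \<times> {0}"
proof -
  obtain t0 where t0: "t0 \<in> T" using T_ne by auto
  obtain b0 where b0: "b0 \<in> B" using B_ne by auto
  define Sd where "Sd = {x - y |x y. x \<in> T \<and> y \<in> T}"
  have linT: "lin T = span Sd" unfolding lin_def Sd_def ..
  obtain y z where yz: "y \<in> span Sd" "\<And>w. w \<in> span Sd \<Longrightarrow> orthogonal z w" "t0 - b0 = y + z"
    using orthogonal_subspace_decomp_exists[of Sd "t0 - b0"] by blast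
  have "z \<noteq> 0"
  proof
    assume "z = 0"
    then have "t0 - b0 \<in> lin T" using yz linT by simp
    then show False using not_in_lin[OF t0 b0] by simp
  qed
  then have zz: "z \<bullet> z > 0" by simp
  have zy: "z \<bullet> y = 0" using yz(2)[OF yz(1)] by (simp add: orthogonal_def)
  have e: "z \<bullet> t0 - z \<bullet> b0 = z \<bullet> z"
  proof -
    have "z \<bullet> (t0 - b0) = z \<bullet> y + z \<bullet> z" using yz(3) by (simp add: inner_add_right)
    then show ?thesis using zy by (simp add: inner_diff_right)
  qed
  have zT: "z \<bullet> t = z \<bullet> t0" if "t \<in> T" for t
  proof -
    have "t - t0 \<in> span Sd" unfolding Sd_def using that t0 by (intro span_base) auto
    then have "z \<bullet> (t - t0) = 0" using yz(2) by (simp add: orthogonal_def)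
    then show ?thesis by (simp add: inner_diff_right)
  qed
  have zB: "z \<bullet> u = z \<bullet> b0" if "u \<in> B" for u
  proof -
    have "u - b0 \<in> lin B" unfolding lin_def using that b0 by (intro span_base) auto
    then have "u - b0 \<in> span Sd" using par linT by simp
    then have "z \<bullet> (u - b0) = 0" using yz(2) by (simp add: orthogonal_def)
    then show ?thesis by (simp add: inner_diff_right)
  qed
  obtain xT where xT: "xT \<in> T" "\<And>y. y \<in> T \<Longrightarrow> c \<bullet> y \<le> c \<bullet> xT"
    using continuous_attains_sup[OF T_compact T_ne, of "\<lambda>x. c \<bullet> x"]
    using continuous_on_inner[OF continuous_on_const continuous_on_id] by blast
  obtain xB where xB: "xB \<in> B" "\<And>y. y \<in> B \<Longrightarrow> c \<bullet> y \<le> c \<bullet> xB"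
    using continuous_attains_sup[OF B_compact B_ne, of "\<lambda>x. c \<bullet> x"]
    using continuous_on_inner[OF continuous_on_const continuous_on_id] by blast
  define mT where "mT = c \<bullet> xT"
  define mB where "mB = c \<bullet> xB"
  define k where "k = (mB - mT) / (z \<bullet> z)"
  define w where "w = c + k *\<^sub>R z"
  define M where "M = mT + k * (z \<bullet> t0)"
  have kz: "k * (z \<bullet> z) = mB - mT" unfolding k_def using zz by simp
  have wT: "w \<bullet> t = c \<bullet> t - mT + M" if "t \<in> T" for t
    unfolding w_def M_def using zT[OF that] by (simp add: inner_add_left)
  have wB: "w \<bullet> u = c \<bullet> u - mB + M" if "u \<in> B" for u
  proof -
    have "w \<bullet> u = c \<bullet> u + k * (z \<bullet> b0)"
      unfolding w_def using zB[OF that] by (simp add: inner_add_left)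
    also have "k * (z \<bullet> b0) = k * (z \<bullet> t0) - k * (z \<bullet> z)" 
    proof -
      have eb: "z \<bullet> b0 = z \<bullet> t0 - z \<bullet> z" using e by linarith
      show ?thesis unfolding eb by (simp add: right_diff_distrib)
    qed
    finally show ?thesis using kz unfolding M_def by simp
  qed
  have "T \<union> B \<subseteq> {x. w \<bullet> x \<le> M}"
  proof
    fix x assume "x \<in> T \<union> B"
    then show "x \<in> {x. w \<bullet> x \<le> M}"
    proof
      assume "x \<in> T" then show ?thesis using wT xT(2) unfolding mT_def by fastforce
    next
      assume "x \<in> B" then show ?thesis using wB xB(2) unfolding mB_def by fastforce
    qed
  qed
  moreover have "convex {x. w \<bullet> x \<le> M}" by (rule convex_halfspace_le)
  ultimately have "convex hull (T \<union> B) \<subseteq> {x. w \<bullet> x \<le> M}" by (rule hull_minimal)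
  then have bound: "\<And>x. x \<in> P \<Longrightarrow> w \<bullet> x \<le> M" using P_hull by auto
  define Phi where "Phi = P \<inter> {x. w \<bullet> x = M}"
  have Phi: "Phi face_of P" unfolding Phi_def
    by (rule face_of_Int_supporting_hyperplane_le[OF polytope_imp_convex[OF polyP] bound])
  have TsubP: "T \<subseteq> P" using face_of_imp_subset[OF TP] .
  have BsubP: "B \<subseteq> P" using face_of_imp_subset[OF BP] .
  have PhiT: "Phi \<inter> T = amax c T"
  proof (rule set_eqI)
    fix x
    show "x \<in> Phi \<inter> T \<longleftrightarrow> x \<in> amax c T"
    proof (cases "x \<in> T")
      case False then show ?thesis by (simp add: amax_def)
    next
      case True
      have xP: "x \<in> P" using True TsubP by blast
      have "x \<in> Phi \<longleftrightarrow> w \<bullet> x = M" unfolding Phi_def using xP by simp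
      also have "\<dots> \<longleftrightarrow> c \<bullet> x = mT" using wT[OF True] by simp
      also have "\<dots> \<longleftrightarrow> (\<forall>y\<in>T. c \<bullet> y \<le> c \<bullet> x)"
      proof
        assume "c \<bullet> x = mT" then show "\<forall>y\<in>T. c \<bullet> y \<le> c \<bullet> x" using xT(2) unfolding mT_def by simp
      next
        assume "\<forall>y\<in>T. c \<bullet> y \<le> c \<bullet> x"
        then have "c \<bullet> xT \<le> c \<bullet> x" using xT(1) by blast
        moreover have "c \<bullet> x \<le> c \<bullet> xT" using xT(2)[OF True] .
        ultimately show "c \<bullet> x = mT" unfolding mT_def by simp
      qed
      finally show ?thesis using True by (simp add: amax_def)
    qed
  qed
  have PhiB: "Phi \<inter> B = amax c B"
  proof (rule set_eqI)
    fix x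
    show "x \<in> Phi \<inter> B \<longleftrightarrow> x \<in> amax c B"
    proof (cases "x \<in> B")
      case False then show ?thesis by (simp add: amax_def)
    next
      case True
      have xP: "x \<in> P" using True BsubP by blast
      have "x \<in> Phi \<longleftrightarrow> w \<bullet> x = M" unfolding Phi_def using xP by simp
      also have "\<dots> \<longleftrightarrow> c \<bullet> x = mB" using wB[OF True] by simp
      also have "\<dots> \<longleftrightarrow> (\<forall>y\<in>B. c \<bullet> y \<le> c \<bullet> x)"
      proof
        assume "c \<bullet> x = mB" then show "\<forall>y\<in>B. c \<bullet> y \<le> c \<bullet> x" using xB(2) unfolding mB_def by simp
      next
        assume "\<forall>y\<in>B. c \<bullet> y \<le> c \<bullet> x"
        then have "c \<bullet> xB \<le> c \<bullet> x" using xB(1) by blast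
        moreover have "c \<bullet> x \<le> c \<bullet> xB" using xB(2)[OF True] .
        ultimately show "c \<bullet> x = mB" unfolding mB_def by simp
      qed
      finally show ?thesis using True by (simp add: amax_def)
    qed
  qed
  have "\<exists>X I. X face_of Q \<and> I face_of {0..1::real} \<and> f Phi = X \<times> I"
    using f_face[OF Phi] by (simp only: face_of_Times_decomp)
  then obtain X I where XI: "X face_of Q" "I face_of {0..1::real}" "f Phi = X \<times> I"
    by blast
  have XQ: "X \<subseteq> Q" using face_of_imp_subset[OF XI(1)] .
  have "xT \<in> amax c T" using xT by (auto simp: amax_def)
  then have "Phi \<inter> T \<noteq> {}" using PhiT by blast
  then have neT: "f (Phi \<inter> T) \<noteq> {}" using f_eq_empty[OF face_of_Int[OF Phi TP]] by simp
  have "xB \<in> amax c B" using xB by (auto simp: amax_def)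
  then have "Phi \<inter> B \<noteq> {}" using PhiB by blast
  then have neB: "f (Phi \<inter> B) \<noteq> {}" using f_eq_empty[OF face_of_Int[OF Phi BP]] by simp
  have eT: "f (Phi \<inter> T) = (X \<times> I) \<inter> (Q \<times> {1})" using f_Int[OF Phi TP] XI(3) fT by simp
  have eB: "f (Phi \<inter> B) = (X \<times> I) \<inter> (Q \<times> {0})" using f_Int[OF Phi BP] XI(3) fB by simp
  have "1 \<in> I" using neT unfolding eT by (rule slice_ne)
  then have "f (amax c T) = X \<times> {1}" unfolding PhiT[symmetric] eT by (rule slice_eq[OF _ XQ])
  moreover have "0 \<in> I" using neB unfolding eB by (rule slice_ne)
  then have "f (amax c B) = X \<times> {0}" unfolding PhiB[symmetric] eB by (rule slice_eq[OF _ XQ])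
  ultimately show ?thesis by blast
qed

end


context fli
begin

lemma fan_incl:
  assumes TP: "T face_of P" and BP: "B face_of P" and fT: "f T = Q \<times> {s}" and fB: "f B = Q \<times> {t}"
    and st: "t \<in> {0,1}" and polyP: "polytope P"
    and key: "\<And>c. \<exists>G0. f (amax c T) = G0 \<times> {s} \<and> f (amax c B) = G0 \<times> {t}"
  shows "normal_fan T \<subseteq> normal_fan B"
proof
  fix N assume "N \<in> normal_fan T"
  then obtain F where F: "F face_of T" "F \<noteq> {}" "N = normal_cone T F"
    unfolding normal_fan_def by blast
  have FP: "F face_of P" using face_of_trans[OF F(1) TP] .
  have FT: "F \<subseteq> T" using face_of_imp_subset[OF F(1)] .
  have "\<exists>X I. X face_of Q \<and> I face_of {0..1::real} \<and> f F = X \<times> I"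
    using f_face[OF FP] by (simp only: face_of_Times_decomp)
  then obtain X I where XI: "X face_of Q" "I face_of {0..1::real}" "f F = X \<times> I"
    by blast
  have XQ: "X \<subseteq> Q" using face_of_imp_subset[OF XI(1)] .
  have ne: "X \<times> I \<noteq> {}" using f_eq_empty[OF FP] F(2) XI(3) by simp
  have "f F \<subseteq> f T" using f_mono[OF FP TP] FT by simp
  then have "X \<times> I \<subseteq> Q \<times> {s}" using XI(3) fT by simp
  then have "I = {s}" using ne by auto
  then have fF: "f F = X \<times> {s}" using XI(3) by simp
  have Xne: "X \<noteq> {}" using ne by simp
  have "X \<times> {t} face_of (Q \<times> {0..1})"
    using face_of_Times_eq XI(1) endpoint_face[OF st] by blast
  then obtain F' where F': "F' face_of P" "f F' = X \<times> {t}" using f_surj by blast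
  have "f F' \<subseteq> f B" using F'(2) fB XQ by auto
  then have F'B: "F' \<subseteq> B" using f_mono[OF F'(1) BP] by simp
  have F'face: "F' face_of B" using face_of_subset[OF F'(1) F'B face_of_imp_subset[OF BP]] .
  have F'ne: "F' \<noteq> {}" using f_eq_empty[OF F'(1)] F'(2) Xne by simp
  have polyT: "polytope T" using face_of_polytope_polytope[OF polyP TP] .
  have polyB: "polytope B" using face_of_polytope_polytope[OF polyP BP] .
  have "normal_cone T F = normal_cone B F'"
  proof (rule set_eqI)
    fix c
    obtain G0 where G0: "f (amax c T) = G0 \<times> {s}" "f (amax c B) = G0 \<times> {t}" using key by blast
    have aT: "amax c T face_of P"
      using face_of_trans[OF amax_face[OF polytope_imp_compact[OF polyT] polytope_imp_convex[OF polyT]] TP] .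
    have aB: "amax c B face_of P"
      using face_of_trans[OF amax_face[OF polytope_imp_compact[OF polyB] polytope_imp_convex[OF polyB]] BP] .
    have "c \<in> normal_cone T F \<longleftrightarrow> F \<subseteq> amax c T" using normal_cone_iff[OF FT] .
    also have "\<dots> \<longleftrightarrow> f F \<subseteq> f (amax c T)" using f_mono[OF FP aT] .
    also have "\<dots> \<longleftrightarrow> X \<subseteq> G0" unfolding fF G0 by auto
    also have "\<dots> \<longleftrightarrow> f F' \<subseteq> f (amax c B)" unfolding F'(2) G0 by auto
    also have "\<dots> \<longleftrightarrow> F' \<subseteq> amax c B" using f_mono[OF F'(1) aB] by simp
    also have "\<dots> \<longleftrightarrow> c \<in> normal_cone B F'" using normal_cone_iff[OF F'B] by simp
    finally show "c \<in> normal_cone T F \<longleftrightarrow> c \<in> normal_cone B F'" .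
  qed
  then show "N \<in> normal_fan B" unfolding normal_fan_def using F(3) F'face F'ne by blast
qed

end

theorem lemma4p1:
  fixes P T B :: "'a::euclidean_space set"
  assumes "prismatoid_with P T B"
  shows "minkowski_equivalent T B"
proof -
  from assms obtain Q :: "'a set" and f :: "'a set \<Rightarrow> ('a \<times> real) set" where
    H: "polytope P" "polytope Q" "Q \<noteq> {}" "face_lattice_iso P (Q \<times> {0..1}) f"
       "T face_of P" "B face_of P" "f T = Q \<times> {1}" "f B = Q \<times> {0}" "parallel_faces T B"
    unfolding prismatoid_with_def by blast
  interpret prz P Q f T B
    using H by (unfold_locales) (auto simp: parallel_faces_def)
  have k1: "\<And>c. \<exists>G0. f (amax c T) = G0 \<times> {1} \<and> f (amax c B) = G0 \<times> {0}" using key .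
  have k2: "\<And>c. \<exists>G0. f (amax c B) = G0 \<times> {0} \<and> f (amax c T) = G0 \<times> {1}" using key by blast
  have "normal_fan T \<subseteq> normal_fan B"
    by (rule fan_incl[OF H(5) H(6) H(7) H(8) _ H(1) k1]) simp
  moreover have "normal_fan B \<subseteq> normal_fan T"
    by (rule fan_incl[OF H(6) H(5) H(8) H(7) _ H(1) k2]) simp
  ultimately show ?thesis unfolding minkowski_equivalent_def by blast
qed

end
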